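(* Let $w:\mathbb{C}\to\mathbb{R}$ be subharmonic and $u:\mathbb{C}\to\mathbb{R}$ harmonic. Suppose there exists a function $\Phi:\mathbb{R}\to[0,+\infty)$ which is locally bounded, satisfies $\lim_{|t|\to\infty}\Phi(t)/|t|=0$, and such that $w(z)\le\Phi(u(z))$ for all $z\in\mathbb{C}$. Then $w$ is constant. *)

theory Defs
  imports "HOL-Analysis.Analysis"
begin

definition harmonic_plane :: "(complex \<Rightarrow> real) \<Rightarrow> bool" where
  "harmonic_plane u \<longleftrightarrow>
     (\<exists>ux uy uxx uxy uyx uyy :: complex \<Rightarrow> real.
        (\<forall>z. (u has_derivative (\<lambda>h. Re h * ux z + Im h * uy z)) (at z)) \<and>
        (\<forall>z. (ux has_derivative (\<lambda>h. Re h * uxx z + Im h * uxy z)) (at z)) \<and>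
        (\<forall>z. (uy has_derivative (\<lambda>h. Re h * uyx z + Im h * uyy z)) (at z)) \<and>
        continuous_on UNIV uxx \<and> continuous_on UNIV uxy \<and>
        continuous_on UNIV uyx \<and> continuous_on UNIV uyy \<and>
        (\<forall>z. uxx z + uyy z = 0))"

text \<open>Subharmonic on the whole plane (real-valued): upper semicontinuous and
  satisfying the sub-mean-value inequality on every circle. (For a real-valued
  function the standard condition forces the circle mean to be finite, hence the
  integrability requirement.)\<close>
definition subharmonic_plane :: "(complex \<Rightarrow> real) \<Rightarrow> bool" where
  "subharmonic_plane w \<longleftrightarrow>
     (\<forall>c. open {z. w z < c}) \<and>
     (\<forall>a r. r > 0 \<longrightarrow>
        (\<lambda>t. w (a + of_real r * cis t)) integrable_on {0..2*pi} \<and>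
        w a \<le> (1 / (2*pi)) * integral {0..2*pi} (\<lambda>t. w (a + of_real r * cis t)))"

end

theory Submission
  imports Defs "HOL-Complex_Analysis.Complex_Analysis"
begin



lemma arc_bound:
  fixes f :: "real \<Rightarrow> real"
  assumes f: "f integrable_on {0..2*pi}" and le: "\<And>t. t\<in>{0..2*pi} \<Longrightarrow> f t \<le> S"
    and le': "\<And>t. t \<in> {pi/4..3*pi/4} \<Longrightarrow> f t \<le> S'" and SS: "S' < S"
  shows "integral {0..2*pi} f < 2*pi*S"
proof -
  have f1: "f integrable_on {0..pi/4}" "f integrable_on {pi/4..3*pi/4}" "f integrable_on {3*pi/4..2*pi}"
    "f integrable_on {pi/4..2*pi}"
    by (rule integrable_subinterval_real[OF f]; auto simp: field_simps)+
  have "integral {0..2*pi} f = integral {0..pi/4} f + integral {pi/4..2*pi} f"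
    by (rule Henstock_Kurzweil_Integration.integral_combine[symmetric]) (use f in auto)
  also have "integral {pi/4..2*pi} f = integral {pi/4..3*pi/4} f + integral {3*pi/4..2*pi} f"
    by (rule Henstock_Kurzweil_Integration.integral_combine[symmetric]) (use f1 in auto)
  also have "integral {0..pi/4} f \<le> integral {0..pi/4} (\<lambda>_. S)"
    by (rule integral_le[OF f1(1)]) (auto intro!: le simp: field_simps)
  also have "integral {pi/4..3*pi/4} f \<le> integral {pi/4..3*pi/4} (\<lambda>_. S')"
    by (rule integral_le[OF f1(2)]) (auto intro!: le' simp: field_simps)
  also have "integral {3*pi/4..2*pi} f \<le> integral {3*pi/4..2*pi} (\<lambda>_. S)"
    by (rule integral_le[OF f1(3)]) (auto intro!: le simp: field_simps)
  finally have "integral {0..2*pi} f \<le> pi/4*S + pi/2*S' + 5*pi/4*S"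
    by (simp add: field_simps)
  also have "\<dots> < 2*pi*S" using SS pi_gt_zero by (simp add: field_simps)
  finally show ?thesis .
qed

lemma usc_closed:
  fixes w h :: "complex \<Rightarrow> real"
  assumes usc: "\<forall>c. open {z. w z < c}" and K: "closed K" and h: "continuous_on K h"
  shows "closed {z \<in> K. c \<le> w z + h z}"
  unfolding closed_def
proof (rule open_contains_ball[THEN iffD2], intro ballI)
  fix x assume x: "x \<in> - {z \<in> K. c \<le> w z + h z}"
  show "\<exists>e>0. ball x e \<subseteq> - {z \<in> K. c \<le> w z + h z}"
  proof (cases "x \<in> K")
    case False
    then obtain e where "e > 0" "ball x e \<subseteq> -K"
      using K open_contains_ball closed_def by (metis ComplI)
    thus ?thesis by blast
  next
    case True
    define d where "d = c - w x - h x"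
    have d: "d > 0" using x True by (auto simp: d_def)
    have "x \<in> {z. w z < w x + d/2}" using d by simp
    then obtain e1 where e1: "e1 > 0" "ball x e1 \<subseteq> {z. w z < w x + d/2}"
      using usc open_contains_ball by metis
    obtain e2 where e2: "e2 > 0" "\<forall>y\<in>K. dist y x < e2 \<longrightarrow> dist (h y) (h x) < d/2"
      using h True d unfolding continuous_on_iff by (metis half_gt_zero)
    show ?thesis
    proof (intro exI[of _ "min e1 e2"] conjI subsetI)
      show "min e1 e2 > 0" using e1 e2 by simp
      fix y assume y: "y \<in> ball x (min e1 e2)"
      show "y \<in> - {z \<in> K. c \<le> w z + h z}"
      proof
        assume yK: "y \<in> {z \<in> K. c \<le> w z + h z}"
        have "w y < w x + d/2" using y e1 by auto
        moreover have "dist (h y) (h x) < d/2" using e2 yK y by (auto simp: dist_commute)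
        moreover have "h y - h x \<le> dist (h y) (h x)" by (simp add: dist_real_def)
        ultimately have "w y < w x + d/2" "h y < h x + d/2" by linarith+
        moreover have "c = w x + h x + d" by (simp add: d_def)
        ultimately have "w y + h y < c" by linarith
        thus False using yK by simp
      qed
    qed
  qed
qed

lemma usc_max:
  fixes v :: "complex \<Rightarrow> real"
  assumes C: "compact C" "C \<noteq> {}" and cl: "\<And>c. closed {z\<in>C. c \<le> v z}"
  shows "\<exists>p\<in>C. \<forall>z\<in>C. v z \<le> v p"
proof (rule ccontr)
  assume "\<not> ?thesis"
  hence nm: "\<forall>p\<in>C. \<exists>q\<in>C. v p < v q" by (auto simp: not_le)
  have cov: "C \<subseteq> (\<Union>q\<in>C. - {z\<in>C. v q \<le> v z})"
    using nm by (force simp: not_le)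
  obtain Q where Q: "Q \<subseteq> C" "finite Q" "C \<subseteq> (\<Union>q\<in>Q. - {z\<in>C. v q \<le> v z})"
    by (rule compactE_image[OF C(1) _ cov]) (use cl in \<open>auto simp: open_Compl\<close>)
  have "Q \<noteq> {}" using Q C by auto
  define m where "m = Max (v ` Q)"
  have "m \<in> v ` Q" unfolding m_def using Q \<open>Q \<noteq> {}\<close> by (intro Max_in) auto
  then obtain q0 where q0: "q0 \<in> Q" "v q0 = m" by auto
  then obtain q where "q \<in> Q" "q0 \<notin> {z\<in>C. v q \<le> v z}" using Q by blast
  hence "v q0 < v q" using q0 Q by auto
  moreover have "v q \<le> m" unfolding m_def using Q \<open>q \<in> Q\<close> by (intro Max_ge) auto
  ultimately show False using q0 by simp
qed




lemma max_principle:
  fixes w h :: "complex \<Rightarrow> real"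
  assumes sub: "subharmonic_plane w" and op: "open \<Omega>" and bd: "bounded \<Omega>"
    and hc: "continuous_on (closure \<Omega>) h"
    and hm: "\<And>p s. s > 0 \<Longrightarrow> cball p s \<subseteq> \<Omega> \<Longrightarrow>
               ((\<lambda>t. h (p + of_real s * cis t)) has_integral (2*pi*h p)) {0..2*pi}"
    and fr: "\<And>z. z \<in> frontier \<Omega> \<Longrightarrow> w z + h z \<le> m"
    and z: "z \<in> \<Omega>"
  shows "w z + h z \<le> m"
proof (rule ccontr)
  assume nz: "\<not> w z + h z \<le> m"
  define v where "v y = w y + h y" for y
  define K where "K = closure \<Omega>"
  have usc: "\<forall>c. open {z. w z < c}" using sub unfolding subharmonic_plane_def by blast
  have K: "compact K" "K \<noteq> {}" using bd z by (auto simp: K_def compact_closure)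
  have clK: "closed {y \<in> K. c \<le> v y}" for c
    unfolding v_def K_def by (rule usc_closed[OF usc closed_closure hc])
  obtain p0 where p0: "p0 \<in> K" "\<And>y. y \<in> K \<Longrightarrow> v y \<le> v p0"
    using usc_max[OF K clK] by blast
  define S where "S = v p0"
  have zK: "z \<in> K" using z closure_subset K_def by blast
  have Sm: "S > m" using nz p0(2)[OF zK] by (simp add: S_def v_def)
  define A where "A = {y \<in> K. S \<le> v y}"
  have cA: "compact A"
  proof -
    have "K \<inter> {y \<in> K. S \<le> v y} = A" by (auto simp: A_def)
    thus ?thesis using compact_Int_closed[OF K(1) clK[of S]] by simp
  qed
  have nA: "A \<noteq> {}" using p0 by (auto simp: A_def S_def)
  obtain p where p: "p \<in> A" "\<And>y. y \<in> A \<Longrightarrow> Im y \<le> Im p"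
  proof -
    have "compact (Im ` A)" by (intro compact_continuous_image continuous_intros cA)
    then obtain s where "s \<in> Im ` A" "\<forall>t\<in>Im ` A. t \<le> s"
      using compact_attains_sup nA by (metis image_is_empty)
    thus ?thesis using that by auto
  qed
  have pK: "p \<in> K" and vp: "v p = S" using p(1) p0(2) by (auto simp: A_def S_def intro: antisym)
  have pO: "p \<in> \<Omega>"
  proof (rule ccontr)
    assume "p \<notin> \<Omega>"
    hence "p \<in> frontier \<Omega>" using pK op by (simp add: K_def frontier_def interior_open)
    hence "v p \<le> m" using fr by (simp add: v_def)
    thus False using vp Sm by simp
  qed
  obtain s where s: "s > 0" "cball p s \<subseteq> \<Omega>" using op pO open_contains_cball by metis
  define q where "q t = p + of_real s * cis t" for t
  have wint: "(\<lambda>t. w (q t)) integrable_on {0..2*pi}"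
    and wmean: "w p \<le> (1 / (2*pi)) * integral {0..2*pi} (\<lambda>t. w (q t))"
    using sub s(1) unfolding subharmonic_plane_def q_def by blast+
  have hint: "((\<lambda>t. h (q t)) has_integral (2*pi*h p)) {0..2*pi}"
    using hm[OF s] by (simp add: q_def)
  have qO: "q t \<in> \<Omega>" for t
  proof -
    have "q t \<in> cball p s" using s(1) by (simp add: q_def dist_norm norm_mult)
    thus ?thesis using s(2) by blast
  qed
  have qK: "q t \<in> K" for t using qO closure_subset K_def by blast
  have vint: "(\<lambda>t. v (q t)) integrable_on {0..2*pi}"
    unfolding v_def using wint hint by (intro integrable_add) auto
  have ival: "integral {0..2*pi} (\<lambda>t. v (q t)) = integral {0..2*pi} (\<lambda>t. w (q t)) + 2*pi*h p"
    unfolding v_def using wint hint by (simp add: integral_add has_integral_integrable integral_unique)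
  have lower: "2*pi*S \<le> integral {0..2*pi} (\<lambda>t. v (q t))"
  proof -
    have "2*pi*w p \<le> integral {0..2*pi} (\<lambda>t. w (q t))"
      using wmean pi_gt_zero by (simp add: field_simps)
    moreover have "2*pi*S = 2*pi*w p + 2*pi*h p" using vp[symmetric] by (simp add: v_def algebra_simps)
    ultimately show ?thesis using ival by linarith
  qed
  define B where "B = q ` {pi/4..3*pi/4}"
  have cB: "compact B" unfolding B_def q_def by (intro compact_continuous_image continuous_intros) auto
  have nB: "B \<noteq> {}" unfolding B_def by auto
  have BK: "B \<subseteq> K" using qK B_def by auto
  have clB: "closed {y \<in> B. c \<le> v y}" for c
  proof -
    have "{y \<in> B. c \<le> v y} = B \<inter> {y \<in> K. c \<le> v y}" using BK by auto
    thus ?thesis using closed_Int[OF compact_imp_closed[OF cB] clK] by simp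
  qed
  obtain p1 where p1: "p1 \<in> B" "\<And>y. y \<in> B \<Longrightarrow> v y \<le> v p1"
    using usc_max[OF cB nB clB] by blast
  have vlt: "v (q t) < S" if t: "t \<in> {pi/4..3*pi/4}" for t
  proof -
    have "pi/4 \<le> t" "t \<le> 3*pi/4" using t by auto
    moreover have "0 < pi" by simp
    ultimately have "0 < t" "t < pi" by linarith+
    hence "sin t > 0" by (intro sin_gt_zero)
    hence "Im (q t) > Im p" using s(1) by (simp add: q_def)
    hence "q t \<notin> A" using p(2) by force
    moreover have "v (q t) \<le> S" using p0(2)[OF qK] S_def by simp
    ultimately show ?thesis using qK by (auto simp: A_def)
  qed
  have "v p1 < S" using p1(1) vlt by (auto simp: B_def)
  have "integral {0..2*pi} (\<lambda>t. v (q t)) < 2*pi*S"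
  proof (rule arc_bound[OF vint _ _ \<open>v p1 < S\<close>])
    show "v (q t) \<le> S" for t using p0(2)[OF qK] S_def by simp
    show "v (q t) \<le> v p1" if "t \<in> {pi/4..3*pi/4}" for t using p1(2) that by (auto simp: B_def)
  qed
  thus False using lower by simp
qed




lemma holo_mean:
  fixes f :: "complex \<Rightarrow> complex"
  assumes hol: "f holomorphic_on S" and S: "open S" and sub: "cball c r \<subseteq> S" and r: "r > 0"
  shows "((\<lambda>t. f (c + of_real r * cis t)) has_integral (of_real (2*pi)*f c)) {0..2*pi}"
proof -
  have "((\<lambda>u. f u/(u-c)) has_contour_integral (2 * of_real pi * \<i> * f c)) (circlepath c r)"
    apply (rule Cauchy_integral_circlepath)
    using hol sub r
      apply (auto intro: holomorphic_on_imp_continuous_on holomorphic_on_subset[OF hol] continuous_on_subset)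
    by (meson hol holomorphic_on_subset ball_subset_cball sub order_trans)
  hence "((\<lambda>t. f (c + r * cis t) / (c + r * cis t - c) * r * \<i> * cis t) has_integral (2 * of_real pi * \<i> * f c)) {0..2*pi}"
    unfolding circlepath_def by (subst (asm) has_contour_integral_part_circlepath_iff) auto
  hence "((\<lambda>t. \<i> * f (c + r * cis t)) has_integral (2 * of_real pi * \<i> * f c)) {0..2*pi}"
    by (rule has_integral_eq[rotated]) (use r in \<open>auto simp: field_simps\<close>)
  from has_integral_mult_right[OF this, of "-\<i>"]
  show ?thesis by (simp add: algebra_simps)
qed

lemma holo_mean_Re:
  fixes f :: "complex \<Rightarrow> complex"
  assumes hol: "f holomorphic_on S" and S: "open S" and sub: "cball c r \<subseteq> S" and r: "r > 0"
  shows "((\<lambda>t. Re (f (c + of_real r * cis t))) has_integral (2*pi*Re (f c))) {0..2*pi}"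
  using has_integral_linear[OF holo_mean[OF assms] bounded_linear_Re] by (simp add: o_def)

lemma log_mean:
  assumes r: "r > 0" and b: "b \<notin> cball c r"
  shows "((\<lambda>t. ln (cmod (c + of_real r * cis t - b))) has_integral (2*pi*ln (cmod (c - b)))) {0..2*pi}"
proof -
  define R where "R = cmod (c - b)"
  have rR: "r < R" using b by (auto simp: R_def dist_norm norm_minus_commute)
  have cb: "c \<noteq> b" using rR r R_def by auto
  define f where "f z = Ln ((z - b) / (c - b))" for z
  have ins: "(z - b) / (c - b) \<notin> \<real>\<^sub>\<le>\<^sub>0" if "z \<in> ball c R" for z
  proof -
    have "(z - b) / (c - b) - 1 = (z - c) / (c - b)" using cb by (simp add: field_simps)
    hence "cmod ((z - b) / (c - b) - 1) < 1" using that cb by (simp add: R_def norm_divide dist_norm norm_minus_commute)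
    hence "Re ((z - b) / (c - b)) > 0"
      by (smt (verit) abs_Re_le_cmod minus_complex.simps(1) one_complex.simps(1))
    thus ?thesis by (auto simp: complex_nonpos_Reals_iff)
  qed
  have hol: "f holomorphic_on ball c R"
    unfolding f_def using cb ins by (intro holomorphic_intros) auto
  have "((\<lambda>t. Re (f (c + of_real r * cis t))) has_integral (2*pi*Re (f c))) {0..2*pi}"
    by (rule holo_mean_Re[OF hol]) (use rR r in auto)
  moreover have "Re (f c) = 0" using cb by (simp add: f_def)
  moreover have "Re (f (c + of_real r * cis t)) = ln (cmod (c + of_real r * cis t - b)) - ln R" for t
  proof -
    have ne: "c + of_real r * cis t - b \<noteq> 0" using b r by (auto simp: dist_norm norm_mult)
    show ?thesis unfolding f_def using ne cb
      by (subst Re_Ln) (auto simp: norm_divide R_def ln_div)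
  qed
  ultimately have "((\<lambda>t. ln (cmod (c + of_real r * cis t - b)) - ln R) has_integral 0) {0..2*pi}" by simp
  from has_integral_add[OF this has_integral_const_real[of "ln R" 0 "2*pi"]]
  show ?thesis by (simp add: R_def mult_ac)
qed




lemma chain_r:
  assumes "\<And>z. (g has_derivative (\<lambda>h. Re h * gx z + Im h * gy z)) (at z)"
  shows "((\<lambda>x. g (p + of_real x * cis t)) has_field_derivative
           (gx (p + of_real x * cis t) * cos t + gy (p + of_real x * cis t) * sin t)) (at x)"
proof -
  have d1: "((\<lambda>x. p + of_real x * cis t) has_derivative (\<lambda>h. of_real h * cis t)) (at x)"
    by (auto intro!: derivative_eq_intros)
  show ?thesis unfolding has_field_derivative_def
    by (rule has_derivative_eq_rhs[OF has_derivative_compose[OF d1 assms]]) (auto simp: algebra_simps fun_eq_iff)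
qed

lemma chain_t:
  assumes "\<And>z. (g has_derivative (\<lambda>h. Re h * gx z + Im h * gy z)) (at z)"
  shows "((\<lambda>t. g (p + of_real x * cis t)) has_field_derivative
           (x * (gy (p + of_real x * cis t) * cos t - gx (p + of_real x * cis t) * sin t))) (at t)"
proof -
  have d1: "((\<lambda>t. p + of_real x * cis t) has_derivative (\<lambda>h. of_real x * (h *\<^sub>R (\<i> * cis t)))) (at t)"
    by (auto intro!: derivative_eq_intros)
  show ?thesis unfolding has_field_derivative_def
    by (rule has_derivative_eq_rhs[OF has_derivative_compose[OF d1 assms]]) (auto simp: algebra_simps fun_eq_iff)
qed

lemma cont_comp_UNIV:
  "continuous_on UNIV g \<Longrightarrow> continuous_on S f \<Longrightarrow> continuous_on S (\<lambda>x. g (f x))"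
  by (rule continuous_on_compose2) auto

lemma harmonic_mean:
  assumes "harmonic_plane u" and r: "r > 0"
  shows "((\<lambda>t. u (p + of_real r * cis t)) has_integral (2*pi*u p)) {0..2*pi}"
proof -
  obtain ux uy uxx uxy uyx uyy :: "complex \<Rightarrow> real" where H:
     "(\<forall>z. (u has_derivative (\<lambda>h. Re h * ux z + Im h * uy z)) (at z)) \<and>
        (\<forall>z. (ux has_derivative (\<lambda>h. Re h * uxx z + Im h * uxy z)) (at z)) \<and>
        (\<forall>z. (uy has_derivative (\<lambda>h. Re h * uyx z + Im h * uyy z)) (at z)) \<and>
        continuous_on UNIV uxx \<and> continuous_on UNIV uxy \<and>
        continuous_on UNIV uyx \<and> continuous_on UNIV uyy \<and>
        (\<forall>z. uxx z + uyy z = 0)"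
    using assms(1) unfolding harmonic_plane_def by blast
  have du: "\<And>z. (u has_derivative (\<lambda>h. Re h * ux z + Im h * uy z)) (at z)" and
    dux: "\<And>z. (ux has_derivative (\<lambda>h. Re h * uxx z + Im h * uxy z)) (at z)" and
    duy: "\<And>z. (uy has_derivative (\<lambda>h. Re h * uyx z + Im h * uyy z)) (at z)" and
    c1: "continuous_on UNIV uxx" "continuous_on UNIV uxy" "continuous_on UNIV uyx" "continuous_on UNIV uyy" and
    lap: "\<And>z. uxx z + uyy z = 0"
    using H by blast+
  have cu: "continuous_on UNIV u" "continuous_on UNIV ux" "continuous_on UNIV uy"
    using du dux duy by (meson continuous_at_imp_continuous_on has_derivative_continuous)+
  note cc = cont_comp_UNIV[OF cu(1)] cont_comp_UNIV[OF cu(2)] cont_comp_UNIV[OF cu(3)]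
     cont_comp_UNIV[OF c1(1)] cont_comp_UNIV[OF c1(2)] cont_comp_UNIV[OF c1(3)] cont_comp_UNIV[OF c1(4)]
  define g where "g x t = p + of_real x * cis t" for x t :: real
  define F where "F x t = u (g x t)" for x t
  define G where "G x t = ux (g x t) * cos t + uy (g x t) * sin t" for x t
  define H where "H x t = (uxx (g x t) * cos t + uxy (g x t) * sin t) * cos t
                        + (uyx (g x t) * cos t + uyy (g x t) * sin t) * sin t" for x t
  define M where "M x = integral {0..2*pi} (F x)" for x
  define N where "N x = integral {0..2*pi} (G x)" for x
  define N2 where "N2 x = integral {0..2*pi} (H x)" for x
  have cg: "continuous_on S (\<lambda>(x,t). g x t)" for S
    unfolding g_def split_beta by (intro continuous_intros)
  have contF: "continuous_on S (\<lambda>(x,t). F x t)" for S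
    unfolding F_def split_beta using cc(1)[OF cg[unfolded split_beta]] by simp
  have contG: "continuous_on S (\<lambda>(x,t). G x t)" for S
    unfolding G_def split_beta by (intro continuous_intros cc(2,3)[OF cg[unfolded split_beta]])
  have contH: "continuous_on S (\<lambda>(x,t). H x t)" for S
    unfolding H_def split_beta by (intro continuous_intros cc(4-7)[OF cg[unfolded split_beta]])
  have intF: "F x integrable_on {a..b}" for x a b
    by (rule integrable_continuous_real) (unfold F_def g_def, intro continuous_intros cc)
  have intG: "G x integrable_on {a..b}" for x a b
    by (rule integrable_continuous_real) (unfold G_def g_def, intro continuous_intros cc)
  have intH: "H x integrable_on {a..b}" for x a b
    by (rule integrable_continuous_real) (unfold H_def g_def, intro continuous_intros cc)
  have dM: "(M has_field_derivative N x) (at x)" for x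
    using leibniz_rule_field_derivative[of UNIV 0 "2*pi" F G x]
    unfolding M_def N_def cbox_interval
    using chain_r[OF du] intF contG unfolding F_def G_def g_def by auto
  have dN: "(N has_field_derivative N2 x) (at x)" for x
  proof -
    have "((\<lambda>x. G x t) has_field_derivative H x t) (at x)" for x t
      unfolding G_def H_def g_def
      by (auto intro!: derivative_eq_intros chain_r[OF dux] chain_r[OF duy])
    thus ?thesis
      using leibniz_rule_field_derivative[of UNIV 0 "2*pi" G H x]
      unfolding N_def N2_def cbox_interval using intG contH by auto
  qed
  have zero: "N x + x * N2 x = 0" for x
  proof -
    define q where "q t = uy (g x t) * cos t - ux (g x t) * sin t" for t
    define q' where "q' t = x * (uyy (g x t) * cos t - uyx (g x t) * sin t) * cos t - uy (g x t) * sin t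
        - (x * (uxy (g x t) * cos t - uxx (g x t) * sin t) * sin t + ux (g x t) * cos t)" for t
    have dq: "(q has_field_derivative q' t) (at t)" for t
      unfolding q_def q'_def g_def
      by (auto intro!: derivative_eq_intros chain_t[OF dux] chain_t[OF duy])
    have "(q' has_integral (q (2*pi) - q 0)) {0..2*pi}"
      by (rule fundamental_theorem_of_calculus)
         (auto intro: simp: has_real_derivative_iff_has_vector_derivative[symmetric] dq has_field_derivative_at_within)
    moreover have "q (2*pi) = q 0" by (simp add: q_def g_def)
    ultimately have iq: "(q' has_integral 0) {0..2*pi}" by simp
    have eq: "G x t + x * H x t = - q' t" for t
    proof -
      have "G x t + x * H x t + q' t = x * (uxx (g x t) + uyy (g x t)) * ((sin t)^2 + (cos t)^2)"
        unfolding G_def H_def q'_def power2_eq_square by algebra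
      thus ?thesis using lap by simp
    qed
    have "((\<lambda>t. G x t + x * H x t) has_integral (N x + x * N2 x)) {0..2*pi}"
      unfolding N_def N2_def
      by (intro has_integral_add has_integral_mult_right integrable_integral intG intH)
    moreover have "((\<lambda>t. G x t + x * H x t) has_integral 0) {0..2*pi}"
      using has_integral_neg[OF iq] eq by simp
    ultimately show ?thesis using has_integral_unique by blast
  qed
  have P0: "x * N x = 0" for x
  proof -
    have "((\<lambda>x. x * N x) has_field_derivative 0) (at x)" for x
      using zero[of x] by (auto intro!: derivative_eq_intros dN simp: algebra_simps)
    hence "x * N x = 0 * N 0" by (rule DERIV_isconst_all[rule_format])
    thus ?thesis by simp
  qed
  have "M r = M 0"
  proof (rule DERIV_isconst2[of 0 r M r])
    show "continuous_on {0..r} M"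
      by (meson DERIV_continuous continuous_at_imp_continuous_on dM)
    fix x :: real assume "0 < x" "x < r"
    thus "DERIV M x :> 0" using dM[of x] P0[of x] by simp
  qed (use r in auto)
  also have "M 0 = 2*pi*u p"
  proof -
    have "F 0 = (\<lambda>t. u p)" by (simp add: fun_eq_iff F_def g_def)
    thus ?thesis by (simp add: M_def)
  qed
  finally show ?thesis using intF[of r 0 "2*pi"] unfolding M_def F_def g_def
    using integrable_integral by metis
qed




lemma le_by_eps:
  fixes a b c :: real
  assumes h: "\<And>\<eta>. \<eta> > 0 \<Longrightarrow> a \<le> b + \<eta> * c" and c: "c \<ge> 0"
  shows "a \<le> b"
proof (rule ccontr)
  assume "\<not> a \<le> b"
  hence ab: "a - b > 0" by simp
  show False
  proof (cases "c = 0")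
    case True thus False using h[of 1] ab by simp
  next
    case False
    hence c0: "c > 0" using c by simp
    have "a \<le> b + ((a - b) / (2*c)) * c" using ab c0 by (intro h) simp
    also have "\<dots> = b + (a - b)/2" using c0 by (simp add: field_simps)
    finally show False using ab by (simp add: field_simps)
  qed
qed

lemma barrier_mean:
  fixes U :: "complex \<Rightarrow> real"
  assumes Um: "\<And>p s. s > 0 \<Longrightarrow> ((\<lambda>t. U (p + of_real s * cis t)) has_integral (2*pi*U p)) {0..2*pi}"
    and s: "s > 0" and b: "b \<notin> cball p s"
  shows "((\<lambda>t. \<alpha> - \<beta> * U (p + of_real s * cis t) - \<eta> * ln (cmod (p + of_real s * cis t - b)))
          has_integral (2*pi*(\<alpha> - \<beta> * U p - \<eta> * ln (cmod (p - b))))) {0..2*pi}"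
proof -
  have "((\<lambda>t. \<alpha>) has_integral (2*pi*\<alpha>)) {0..2*pi}"
    using has_integral_const_real[of \<alpha> 0 "2*pi"] by simp
  from has_integral_diff[OF has_integral_diff[OF this has_integral_mult_right[OF Um[OF s], of \<beta>]]
       has_integral_mult_right[OF log_mean[OF s b], of \<eta>]]
  show ?thesis by (simp add: algebra_simps)
qed

lemma harmonic_cont: "harmonic_plane u \<Longrightarrow> continuous_on UNIV u"
  unfolding harmonic_plane_def
  by (meson continuous_at_imp_continuous_on has_derivative_continuous)

lemma phi_bound:
  fixes \<Phi> :: "real \<Rightarrow> real"
  assumes lb: "\<forall>x. \<exists>e>0. bounded (\<Phi> ` ball x e)"
    and lim: "((\<lambda>t. \<Phi> t / \<bar>t\<bar>) \<longlongrightarrow> 0) at_infinity"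
    and e: "\<epsilon> > 0"
  shows "\<exists>C. \<forall>t. \<Phi> t \<le> \<epsilon> * \<bar>t\<bar> + C"
proof -
  have "eventually (\<lambda>t. dist (\<Phi> t / \<bar>t\<bar>) 0 < \<epsilon>) at_infinity"
    using lim e tendstoD by blast
  then obtain T0 where T0: "\<And>t. T0 \<le> norm t \<Longrightarrow> dist (\<Phi> t / \<bar>t\<bar>) 0 < \<epsilon>"
    unfolding eventually_at_infinity by blast
  define T where "T = max T0 1"
  have big: "\<Phi> t \<le> \<epsilon> * \<bar>t\<bar>" if "T \<le> \<bar>t\<bar>" for t
  proof -
    have t0: "\<bar>t\<bar> > 0" using that unfolding T_def by linarith
    have "\<bar>\<Phi> t / \<bar>t\<bar>\<bar> < \<epsilon>" using T0[of t] that by (simp add: T_def dist_real_def)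
    hence "\<Phi> t / \<bar>t\<bar> < \<epsilon>" by linarith
    thus ?thesis using t0 by (simp add: field_simps)
  qed
  obtain e where e: "\<And>x. e x > 0 \<and> bounded (\<Phi> ` ball x (e x))" using lb by metis
  have cov: "{-T..T} \<subseteq> (\<Union>x\<in>{-T..T}. ball x (e x))" using e by force
  obtain Q where Q: "Q \<subseteq> {-T..T}" "finite Q" "{-T..T} \<subseteq> (\<Union>x\<in>Q. ball x (e x))"
    by (rule compactE_image[OF compact_Icc _ cov]) auto
  have "bounded (\<Union>x\<in>Q. \<Phi> ` ball x (e x))" using Q(2) e by (intro bounded_UN) auto
  moreover have "\<Phi> ` {-T..T} \<subseteq> (\<Union>x\<in>Q. \<Phi> ` ball x (e x))" using Q(3) by blast
  ultimately have "bounded (\<Phi> ` {-T..T})" by (rule bounded_subset)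
  then obtain B where B: "\<And>y. y \<in> \<Phi> ` {-T..T} \<Longrightarrow> \<bar>y\<bar> \<le> B"
    unfolding bounded_real by blast
  show ?thesis
  proof (intro exI allI)
    fix t
    show "\<Phi> t \<le> \<epsilon> * \<bar>t\<bar> + max B 0"
    proof (cases "T \<le> \<bar>t\<bar>")
      case True thus ?thesis using big[OF True] by simp
    next
      case False
      hence "t \<in> {-T..T}" by auto
      hence "\<Phi> t \<le> B" using B by force
      thus ?thesis using e by (smt (verit) \<open>0 < \<epsilon>\<close> abs_ge_zero mult_nonneg_nonneg)
    qed
  qed
qed




lemma half_bound:
  fixes w U :: "complex \<Rightarrow> real"
  assumes sub: "subharmonic_plane w"
    and Uc: "continuous_on UNIV U"
    and Um: "\<And>p s. s > 0 \<Longrightarrow> ((\<lambda>t. U (p + of_real s * cis t)) has_integral (2*pi*U p)) {0..2*pi}"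
    and bnd: "\<And>\<epsilon>. \<epsilon> > 0 \<Longrightarrow> \<exists>C. \<forall>z. 0 \<le> U z \<longrightarrow> w z \<le> \<epsilon> * U z + C"
    and zer: "\<And>z. U z = 0 \<Longrightarrow> w z \<le> A"
  shows "\<exists>M. \<forall>z. 0 < U z \<longrightarrow> w z \<le> M"
proof -
  have usc: "\<forall>c. open {z. w z < c}" using sub unfolding subharmonic_plane_def by blast
  have "closed {z \<in> cball 0 1. c \<le> w z + (\<lambda>_. 0) z}" for c
    by (rule usc_closed[OF usc]) auto
  hence "\<exists>p\<in>cball 0 1. \<forall>z\<in>cball 0 1. w z \<le> w p"
    by (intro usc_max) auto
  then obtain Kw where Kw: "\<And>z. z \<in> cball 0 1 \<Longrightarrow> w z \<le> Kw" by blast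
  define M where "M = max (max A Kw) 0"
  have "w z0 \<le> M" if z0: "0 < U z0" for z0
  proof (cases "cmod z0 \<le> 1")
    case True thus ?thesis using Kw[of z0] by (simp add: M_def)
  next
    case False
    hence z1: "cmod z0 > 1" by simp
    show ?thesis
    proof (rule le_by_eps[where c="U z0"])
      fix \<epsilon> :: real assume e: "\<epsilon> > 0"
      obtain C where C: "\<And>z. 0 \<le> U z \<Longrightarrow> w z \<le> \<epsilon> * U z + C" using bnd[OF e] by blast
      show "w z0 \<le> M + \<epsilon> * U z0"
      proof (rule le_by_eps[where c="ln (cmod z0)"])
        fix \<eta> :: real assume eta: "\<eta> > 0"
        define \<rho> where "\<rho> = max (cmod z0 + 1) (exp (\<bar>C\<bar> / \<eta>))"
        define \<Omega> where "\<Omega> = {z. 0 < U z} \<inter> ball 0 \<rho> \<inter> {z. 1 < cmod z}"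
        define h where "h z = 0 - \<epsilon> * U z - \<eta> * ln (cmod (z - 0))" for z
        have \<rho>: "\<rho> > 0" "\<eta> * ln \<rho> \<ge> \<bar>C\<bar>"
        proof -
          have "0 < cmod z0 + 1" by (simp add: add_nonneg_pos)
          thus r0: "\<rho> > 0" unfolding \<rho>_def by (rule less_le_trans[OF _ max.cobounded1])
          have "ln \<rho> \<ge> ln (exp (\<bar>C\<bar> / \<eta>))" using r0 by (subst ln_le_cancel_iff) (auto simp: \<rho>_def)
          thus "\<eta> * ln \<rho> \<ge> \<bar>C\<bar>" using eta by (simp add: field_simps)
        qed
        have op: "open \<Omega>" unfolding \<Omega>_def
          by (intro open_Int open_Collect_less Uc continuous_intros) auto
        have bd: "bounded \<Omega>" unfolding \<Omega>_def by (meson Int_lower2 bounded_ball bounded_subset inf_le1 order_trans)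
        have clo: "closure \<Omega> \<subseteq> {z. 0 \<le> U z} \<inter> cball 0 \<rho> \<inter> {z. 1 \<le> cmod z}"
          unfolding \<Omega>_def
          by (intro closure_minimal closed_Int closed_Collect_le Uc continuous_intros) auto
        have hc: "continuous_on (closure \<Omega>) h"
        proof -
          have "continuous_on ({z. 1 \<le> cmod z}) h"
            unfolding h_def by (intro continuous_intros continuous_on_subset[OF Uc]) auto
          thus ?thesis using clo continuous_on_subset by blast
        qed
        have hm: "((\<lambda>t. h (p + of_real s * cis t)) has_integral (2*pi*h p)) {0..2*pi}"
          if "s > 0" "cball p s \<subseteq> \<Omega>" for p s
        proof -
          have "0 \<notin> \<Omega>" by (simp add: \<Omega>_def)
          hence "0 \<notin> cball p s" using that(2) by blast
          from barrier_mean[OF Um that(1) this, of 0 \<epsilon> \<eta>] show ?thesis by (simp add: h_def)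
        qed
        have fr: "w z + h z \<le> M" if zf: "z \<in> frontier \<Omega>" for z
        proof -
          have zc: "z \<in> closure \<Omega>" and zn: "z \<notin> \<Omega>" using zf op by (auto simp: frontier_def interior_open)
          have U0: "0 \<le> U z" and zr: "cmod z \<le> \<rho>" and z1: "1 \<le> cmod z" using clo zc by auto
          have lnz: "ln (cmod z) \<ge> 0" using z1 by simp
          consider "U z = 0" | "cmod z = \<rho>" | "cmod z = 1"
            using zn U0 zr z1 by (force simp: \<Omega>_def)
          thus ?thesis
          proof cases
            case 1
            have "\<eta> * ln (cmod z) \<ge> 0" using eta lnz by simp
            moreover have "A \<le> M" by (simp add: M_def)
            ultimately show ?thesis using zer[of z] 1 by (simp add: h_def)
          next
            case 2
            have "w z \<le> \<epsilon> * U z + C" using C U0 by blast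
            thus ?thesis using 2 \<rho> by (simp add: h_def M_def)
          next
            case 3
            have "w z \<le> Kw" using Kw 3 by simp
            moreover have "\<epsilon> * U z \<ge> 0" using e U0 by simp
            ultimately show ?thesis using 3 by (simp add: h_def M_def)
          qed
        qed
        have "z0 \<in> \<Omega>" using z0 z1 by (simp add: \<Omega>_def \<rho>_def)
        from max_principle[OF sub op bd hc hm fr this]
        show "w z0 \<le> M + \<epsilon> * U z0 + \<eta> * ln (cmod z0)" by (simp add: h_def)
      qed (use z1 in simp)
    qed (use z0 in simp)
  qed
  thus ?thesis by blast
qed




lemma liouville_sub:
  fixes w :: "complex \<Rightarrow> real"
  assumes sub: "subharmonic_plane w" and bdd: "\<And>z. w z \<le> M"
  shows "w z \<le> w a"
proof (cases "z = a")
  case True thus ?thesis by simp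
next
  case False
  hence za: "cmod (z - a) > 0" by simp
  have usc: "\<forall>c. open {z. w z < c}" using sub unfolding subharmonic_plane_def by blast
  show ?thesis
  proof (rule le_by_eps[where c=1])
    fix e :: real assume e: "e > 0"
    define m where "m = w a + e"
    have "a \<in> {y. w y < m}" using e by (simp add: m_def)
    then obtain r1 where r1: "r1 > 0" "ball a r1 \<subseteq> {y. w y < m}"
      using usc open_contains_ball by metis
    define r0 where "r0 = min (r1/2) (cmod (z - a) / 2)"
    have r0: "r0 > 0" "r0 < r1" "r0 < cmod (z - a)"
    proof -
      show r00: "r0 > 0" "r0 < r1" using r1 za by (auto simp: r0_def)
      have "r0 \<le> cmod (z - a) / 2" by (simp add: r0_def)
      hence "2 * r0 \<le> cmod (z - a)" by (simp add: field_simps)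
      thus "r0 < cmod (z - a)" using r00(1) by linarith
    qed
    show "w z \<le> w a + e * 1"
    proof (rule le_by_eps[where c="ln (cmod (z - a)) - ln r0"])
      fix \<eta> :: real assume eta: "\<eta> > 0"
      define R where "R = max (cmod (z - a) + 1) (r0 * exp (\<bar>M - m\<bar> / \<eta>))"
      define \<Omega> where "\<Omega> = ball a R \<inter> {y. r0 < cmod (y - a)}"
      define h where "h y = \<eta> * ln r0 - 0 * (\<lambda>_. 0::real) y - \<eta> * ln (cmod (y - a))" for y
      have R: "R > 0" "\<eta> * (ln R - ln r0) \<ge> \<bar>M - m\<bar>"
      proof -
        have "0 < cmod (z - a) + 1" by (simp add: add_nonneg_pos)
        thus R0: "R > 0" unfolding R_def by (rule less_le_trans[OF _ max.cobounded1])
        have "ln R \<ge> ln (r0 * exp (\<bar>M - m\<bar> / \<eta>))" using R0 r0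
          by (subst ln_le_cancel_iff) (auto simp: R_def)
        also have "ln (r0 * exp (\<bar>M - m\<bar> / \<eta>)) = ln r0 + \<bar>M - m\<bar> / \<eta>"
          using r0 by (simp add: ln_mult)
        finally show "\<eta> * (ln R - ln r0) \<ge> \<bar>M - m\<bar>" using eta by (simp add: field_simps)
      qed
      have op: "open \<Omega>" unfolding \<Omega>_def
        by (intro open_Int open_ball open_Collect_less continuous_intros)
      have bd: "bounded \<Omega>" unfolding \<Omega>_def by (meson Int_lower1 bounded_ball bounded_subset)
      have clo: "closure \<Omega> \<subseteq> cball a R \<inter> {y. r0 \<le> cmod (y - a)}"
        unfolding \<Omega>_def
        by (intro closure_minimal closed_Int closed_cball closed_Collect_le continuous_intros)
           (auto simp: dist_norm norm_minus_commute)
      have hc: "continuous_on (closure \<Omega>) h"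
      proof -
        have "continuous_on {y. r0 \<le> cmod (y - a)} h"
          unfolding h_def using r0 by (intro continuous_intros) auto
        thus ?thesis using clo continuous_on_subset by blast
      qed
      have hm: "((\<lambda>t. h (p + of_real s * cis t)) has_integral (2*pi*h p)) {0..2*pi}"
        if "s > 0" "cball p s \<subseteq> \<Omega>" for p s
      proof -
        have "a \<notin> \<Omega>" using r0(1) by (simp add: \<Omega>_def)
        hence "a \<notin> cball p s" using that(2) by blast
        from barrier_mean[where U="\<lambda>_. 0", OF _ that(1) this, of "\<eta> * ln r0" 0 \<eta>]
        show ?thesis by (simp add: h_def)
      qed
      have fr: "w y + h y \<le> m" if yf: "y \<in> frontier \<Omega>" for y
      proof -
        have yc: "y \<in> closure \<Omega>" and yn: "y \<notin> \<Omega>" using yf op by (auto simp: frontier_def interior_open)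
        have yR: "cmod (y - a) \<le> R" and yr: "r0 \<le> cmod (y - a)" using clo yc
          by (auto simp: dist_norm norm_minus_commute)
        consider "cmod (y - a) = R" | "cmod (y - a) = r0"
          using yn yR yr by (force simp: \<Omega>_def dist_norm norm_minus_commute)
        thus ?thesis
        proof cases
          case 1
          have "h y = - (\<eta> * (ln R - ln r0))" using 1 by (simp add: h_def algebra_simps)
          thus ?thesis using bdd[of y] R(2) by simp
        next
          case 2
          have "y \<in> ball a r1" using 2 r0 by (simp add: dist_norm norm_minus_commute)
          hence "w y < m" using r1 by blast
          moreover have "h y = 0" using 2 by (simp add: h_def)
          ultimately show ?thesis by simp
        qed
      qed
      have "z \<in> \<Omega>" using r0 by (simp add: \<Omega>_def R_def dist_norm norm_minus_commute)
      from max_principle[OF sub op bd hc hm fr this]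
      show "w z \<le> w a + e * 1 + \<eta> * (ln (cmod (z - a)) - ln r0)"
        by (simp add: h_def m_def algebra_simps)
    next
      have "ln r0 \<le> ln (cmod (z - a))" using r0(1,3) za by (subst ln_le_cancel_iff) auto
      thus "0 \<le> ln (cmod (z - a)) - ln r0" by simp
    qed
  qed simp
qed




theorem theorem4:
  fixes w u :: "complex \<Rightarrow> real" and \<Phi> :: "real \<Rightarrow> real"
  assumes "subharmonic_plane w"
    and "harmonic_plane u"
    and "\<forall>t. \<Phi> t \<ge> 0"
    and "\<forall>x. \<exists>e>0. bounded (\<Phi> ` ball x e)"
    and "((\<lambda>t. \<Phi> t / \<bar>t\<bar>) \<longlongrightarrow> 0) at_infinity"
    and "\<forall>z. w z \<le> \<Phi> (u z)"
  shows "\<exists>c. \<forall>z. w z = c"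
proof -
  note sub = assms(1) and wle = assms(6)
  have uc: "continuous_on UNIV u" by (rule harmonic_cont[OF assms(2)])
  have um: "((\<lambda>t. u (p + of_real s * cis t)) has_integral (2*pi*u p)) {0..2*pi}" if "s > 0" for p s
    by (rule harmonic_mean[OF assms(2) that])
  have bphi: "\<exists>C. \<forall>t. \<Phi> t \<le> \<epsilon> * \<bar>t\<bar> + C" if "\<epsilon> > 0" for \<epsilon>
    by (rule phi_bound[OF assms(4) assms(5) that])
  obtain M1 where M1: "\<forall>z. 0 < u z \<longrightarrow> w z \<le> M1"
  proof -
    have "\<exists>M. \<forall>z. 0 < u z \<longrightarrow> w z \<le> M"
    proof (rule half_bound[OF sub uc um, of "\<Phi> 0"])
      fix \<epsilon> :: real assume e: "\<epsilon> > 0"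
      then obtain C where C: "\<forall>t. \<Phi> t \<le> \<epsilon> * \<bar>t\<bar> + C" using bphi by blast
      show "\<exists>C. \<forall>z. 0 \<le> u z \<longrightarrow> w z \<le> \<epsilon> * u z + C"
      proof (intro exI allI impI)
        fix z assume "0 \<le> u z"
        thus "w z \<le> \<epsilon> * u z + C" using C wle by (metis abs_of_nonneg order_trans)
      qed
    next
      fix z assume "u z = 0" thus "w z \<le> \<Phi> 0" using wle by metis
    qed
    thus ?thesis using that by blast
  qed
  obtain M2 where M2: "\<forall>z. 0 < - u z \<longrightarrow> w z \<le> M2"
  proof -
    have "\<exists>M. \<forall>z. 0 < - u z \<longrightarrow> w z \<le> M"
    proof (rule half_bound[OF sub, of "\<lambda>z. - u z" "\<Phi> 0"])
      show "continuous_on UNIV (\<lambda>z. - u z)" using uc by (intro continuous_intros)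
      fix p :: complex and s :: real assume "s > 0"
      from has_integral_neg[OF um[OF this, of p]]
      show "((\<lambda>t. - u (p + of_real s * cis t)) has_integral (2*pi*(- u p))) {0..2*pi}" by simp
    next
      fix \<epsilon> :: real assume e: "\<epsilon> > 0"
      then obtain C where C: "\<forall>t. \<Phi> t \<le> \<epsilon> * \<bar>t\<bar> + C" using bphi by blast
      show "\<exists>C. \<forall>z. 0 \<le> - u z \<longrightarrow> w z \<le> \<epsilon> * (- u z) + C"
      proof (intro exI allI impI)
        fix z assume "0 \<le> - u z"
        hence "\<bar>u z\<bar> = - u z" by simp
        thus "w z \<le> \<epsilon> * (- u z) + C" using C wle by (metis order_trans)
      qed
    next
      fix z assume "- u z = 0" thus "w z \<le> \<Phi> 0" using wle by (metis neg_equal_0_iff_equal)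
    qed
    thus ?thesis using that by blast
  qed
  have bdd: "w z \<le> max (max M1 M2) (\<Phi> 0)" for z
  proof (cases "u z > 0")
    case True thus ?thesis using M1 by force
  next
    case False
    show ?thesis
    proof (cases "u z = 0")
      case True thus ?thesis using wle by (metis max.coboundedI2)
    next
      case False
      hence "0 < - u z" using \<open>\<not> u z > 0\<close> by simp
      thus ?thesis using M2 by force
    qed
  qed
  have "w z = w 0" for z
    using liouville_sub[OF sub bdd, of z 0] liouville_sub[OF sub bdd, of 0 z] by simp
  thus ?thesis by blast
qed


end
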